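(* Let $(E,\mathcal{P})$ be a random locally convex module over $K$ with base $(\Omega,\mathcal{F},P)$, endowed with its $(\varepsilon,\lambda)$-topology $\mathcal{T}_{\varepsilon,\lambda}$. Then there exist a family of random normed modules $\{(E_q,\|\cdot\|_q):q\in\mathcal{Q}\}$ over $K$ with base $(\Omega,\mathcal{F},P)$ and an $L^0(\mathcal{F},K)$-module homomorphism $h:E\to\prod_{q\in\mathcal{Q}}E_q$ such that $h$ is a homeomorphism from $(E,\mathcal{T}_{\varepsilon,\lambda})$ onto $(h(E),\mathcal{T})$, where $\mathcal{T}$ is the (relative) product topology of $\prod_{q\in\mathcal{Q}}(E_q,\mathcal{T}_{\varepsilon,\lambda})$.
   Context: $(\Omega,\mathcal{F},P)$ is a probability space, $K=\mathbb{R}$ or $\mathbb{C}$, $L^0(\mathcal{F},K)$ is the algebra of equivalence classes (modulo $P$-a.s. equality) of $K$-valued $\mathcal{F}$-measurable random variables, $L^0_+$ the nonnegative elements of $L^0(\mathcal{F},\mathbb{R})$. An $L^0$-seminorm on an $L^0(\mathcal{F},K)$-module $E$ is a map $\|\cdot\|:E\to L^0_+$ with $\|\xi x\|=|\xi|\|x\|$ and $\|x+y\|\le\|x\|+\|y\|$; it is an $L^0$-norm if moreover $\|x\|=0$ implies $x=\theta$. A random normed module is a pair $(E,\|\cdot\|)$ with $\|\cdot\|$ an $L^0$-norm. A random locally convex module $(E,\mathcal{P})$ is an $L^0(\mathcal{F},K)$-module $E$ with a family $\mathcal{P}$ of $L^0$-seminorms such that $\bigvee\{\|x\|:\|\cdot\|\in\mathcal{P}\}=0$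 iff $x=\theta$ (a random normed module is the case $\mathcal{P}=\{\|\cdot\|\}$). For finite nonempty $\mathcal{Q}\subset\mathcal{P}$ let $\|x\|_{\mathcal{Q}}=\bigvee_{\|\cdot\|\in\mathcal{Q}}\|x\|$; the $(\varepsilon,\lambda)$-topology $\mathcal{T}_{\varepsilon,\lambda}$ on $E$ has local base at $\theta$ the sets $\{x: P\{\|x\|_{\mathcal{Q}}<\varepsilon\}>1-\lambda\}$ ($\mathcal{Q}$ finite nonempty, $\varepsilon>0$, $0<\lambda<1$). *)

theory Defs
  imports "HOL-Probability.Probability"
begin

text \<open>Elements of L0(F,K) are represented by F-measurable K-valued functions;
 two representatives are identified when they agree almost surely.
 The module E is given by a carrier set with addition, zero and an action
 of representatives of L0 which must respect almost sure equality.\<close>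

definition L0_module ::
  "'w measure \<Rightarrow> 'e set \<Rightarrow> ('e \<Rightarrow> 'e \<Rightarrow> 'e) \<Rightarrow> 'e \<Rightarrow>
   (('w \<Rightarrow> 'k::{real_normed_field,banach}) \<Rightarrow> 'e \<Rightarrow> 'e) \<Rightarrow> bool" where
  "L0_module M E add zero smul \<longleftrightarrow>
     zero \<in> E \<and>
     (\<forall>x\<in>E. \<forall>y\<in>E. add x y \<in> E) \<and>
     (\<forall>\<xi>\<in>borel_measurable M. \<forall>x\<in>E. smul \<xi> x \<in> E) \<and>
     (\<forall>x\<in>E. \<forall>y\<in>E. \<forall>z\<in>E. add (add x y) z = add x (add y z)) \<and>
     (\<forall>x\<in>E. \<forall>y\<in>E. add x y = add y x) \<and>
     (\<forall>x\<in>E. add zero x = x) \<and>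
     (\<forall>x\<in>E. \<exists>y\<in>E. add x y = zero) \<and>
     (\<forall>\<xi>\<in>borel_measurable M. \<forall>\<eta>\<in>borel_measurable M. \<forall>x\<in>E.
         (AE \<omega> in M. \<xi> \<omega> = \<eta> \<omega>) \<longrightarrow> smul \<xi> x = smul \<eta> x) \<and>
     (\<forall>\<xi>\<in>borel_measurable M. \<forall>x\<in>E. \<forall>y\<in>E.
         smul \<xi> (add x y) = add (smul \<xi> x) (smul \<xi> y)) \<and>
     (\<forall>\<xi>\<in>borel_measurable M. \<forall>\<eta>\<in>borel_measurable M. \<forall>x\<in>E.
         smul (\<lambda>\<omega>. \<xi> \<omega> + \<eta> \<omega>) x = add (smul \<xi> x) (smul \<eta> x)) \<and>
     (\<forall>\<xi>\<in>borel_measurable M. \<forall>\<eta>\<in>borel_measurable M. \<forall>x\<in>E.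
         smul (\<lambda>\<omega>. \<xi> \<omega> * \<eta> \<omega>) x = smul \<xi> (smul \<eta> x)) \<and>
     (\<forall>x\<in>E. smul (\<lambda>\<omega>. 1) x = x)"

definition L0_seminorm ::
  "'w measure \<Rightarrow> 'e set \<Rightarrow> ('e \<Rightarrow> 'e \<Rightarrow> 'e) \<Rightarrow>
   (('w \<Rightarrow> 'k::{real_normed_field,banach}) \<Rightarrow> 'e \<Rightarrow> 'e) \<Rightarrow> ('e \<Rightarrow> 'w \<Rightarrow> real) \<Rightarrow> bool" where
  "L0_seminorm M E add smul nm \<longleftrightarrow>
     (\<forall>x\<in>E. nm x \<in> borel_measurable M \<and> (AE \<omega> in M. 0 \<le> nm x \<omega>)) \<and>
     (\<forall>\<xi>\<in>borel_measurable M. \<forall>x\<in>E.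
         AE \<omega> in M. nm (smul \<xi> x) \<omega> = norm (\<xi> \<omega>) * nm x \<omega>) \<and>
     (\<forall>x\<in>E. \<forall>y\<in>E. AE \<omega> in M. nm (add x y) \<omega> \<le> nm x \<omega> + nm y \<omega>)"

definition L0_norm ::
  "'w measure \<Rightarrow> 'e set \<Rightarrow> ('e \<Rightarrow> 'e \<Rightarrow> 'e) \<Rightarrow> 'e \<Rightarrow>
   (('w \<Rightarrow> 'k::{real_normed_field,banach}) \<Rightarrow> 'e \<Rightarrow> 'e) \<Rightarrow> ('e \<Rightarrow> 'w \<Rightarrow> real) \<Rightarrow> bool" where
  "L0_norm M E add zero smul nm \<longleftrightarrow>
     L0_seminorm M E add smul nm \<and>
     (\<forall>x\<in>E. (AE \<omega> in M. nm x \<omega> = 0) \<longrightarrow> x = zero)"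

definition random_normed_module ::
  "'w measure \<Rightarrow> 'e set \<Rightarrow> ('e \<Rightarrow> 'e \<Rightarrow> 'e) \<Rightarrow> 'e \<Rightarrow>
   (('w \<Rightarrow> 'k::{real_normed_field,banach}) \<Rightarrow> 'e \<Rightarrow> 'e) \<Rightarrow> ('e \<Rightarrow> 'w \<Rightarrow> real) \<Rightarrow> bool" where
  "random_normed_module M E add zero smul nm \<longleftrightarrow>
     L0_module M E add zero smul \<and> L0_norm M E add zero smul nm"

text \<open>The condition
  \<open>\<Or>{||x|| : ||.|| \<in> P} = 0 iff x = \<theta>\<close> is written out: since all
  the seminorms are nonnegative, the supremum in L0 vanishes iff every member
  vanishes a.s.; the direction x = \<theta> \<Longrightarrow> sup = 0 holds for every seminorm.\<close>
definition random_locally_convex_module ::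
  "'w measure \<Rightarrow> 'e set \<Rightarrow> ('e \<Rightarrow> 'e \<Rightarrow> 'e) \<Rightarrow> 'e \<Rightarrow>
   (('w \<Rightarrow> 'k::{real_normed_field,banach}) \<Rightarrow> 'e \<Rightarrow> 'e) \<Rightarrow> ('e \<Rightarrow> 'w \<Rightarrow> real) set \<Rightarrow> bool" where
  "random_locally_convex_module M E add zero smul PP \<longleftrightarrow>
     L0_module M E add zero smul \<and>
     (\<forall>p\<in>PP. L0_seminorm M E add smul p) \<and>
     (\<forall>x\<in>E. (\<forall>p\<in>PP. AE \<omega> in M. p x \<omega> = 0) \<longrightarrow> x = zero)"

definition eps_lambda_nbhd ::
  "'w measure \<Rightarrow> 'e set \<Rightarrow> ('e \<Rightarrow> 'w \<Rightarrow> real) set \<Rightarrow> real \<Rightarrow> real \<Rightarrow> 'e set" where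
  "eps_lambda_nbhd M E Q eps lam =
     {z \<in> E. measure M {\<omega> \<in> space M. Max ((\<lambda>p. p z \<omega>) ` Q) < eps} > 1 - lam}"

definition eps_lambda_topology ::
  "'w measure \<Rightarrow> 'e set \<Rightarrow> ('e \<Rightarrow> 'e \<Rightarrow> 'e) \<Rightarrow> ('e \<Rightarrow> 'w \<Rightarrow> real) set \<Rightarrow> 'e topology" where
  "eps_lambda_topology M E add PP = topology (\<lambda>U. U \<subseteq> E \<and>
     (\<forall>x\<in>U. \<exists>Q eps lam. finite Q \<and> Q \<noteq> {} \<and> Q \<subseteq> PP \<and> 0 < eps \<and> 0 < lam \<and> lam < 1 \<and>
        (\<forall>z\<in>eps_lambda_nbhd M E Q eps lam. add x z \<in> U)))"

end

theory Submission
  imports Defs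
begin

locale elt = prob_space M for M :: "'w measure" +
  fixes S :: "'e set" and add :: "'e \<Rightarrow> 'e \<Rightarrow> 'e" and zero :: 'e
    and F :: "('e \<Rightarrow> 'w \<Rightarrow> real) set"
  assumes add_closed: "\<And>x y. x \<in> S \<Longrightarrow> y \<in> S \<Longrightarrow> add x y \<in> S"
    and zero_in: "zero \<in> S"
    and add_zero: "\<And>x. x \<in> S \<Longrightarrow> add x zero = x"
    and assoc: "\<And>x y z. x \<in> S \<Longrightarrow> y \<in> S \<Longrightarrow> z \<in> S \<Longrightarrow> add (add x y) z = add x (add y z)"
    and meas: "\<And>p z. p \<in> F \<Longrightarrow> z \<in> S \<Longrightarrow> p z \<in> borel_measurable M"
    and tri: "\<And>p x y. p \<in> F \<Longrightarrow> x \<in> S \<Longrightarrow> y \<in> S \<Longrightarrow> AE \<omega> in M. p (add x y) \<omega> \<le> p x \<omega> + p y \<omega>"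
    and pzero: "\<And>p. p \<in> F \<Longrightarrow> AE \<omega> in M. p zero \<omega> = 0"
    and Fne: "F \<noteq> {}"
begin

definition good :: "'e set \<Rightarrow> bool" where
  "good U \<longleftrightarrow> U \<subseteq> S \<and>
     (\<forall>x\<in>U. \<exists>Q eps lam. finite Q \<and> Q \<noteq> {} \<and> Q \<subseteq> F \<and> 0 < eps \<and> 0 < lam \<and> lam < 1 \<and>
        (\<forall>z\<in>eps_lambda_nbhd M S Q eps lam. add x z \<in> U))"

lemma goodD:
  assumes "good U" "x \<in> U"
  obtains Q eps lam where "finite Q" "Q \<noteq> {}" "Q \<subseteq> F" "0 < eps" "0 < lam" "lam < 1"
        "\<forall>z\<in>eps_lambda_nbhd M S Q eps lam. add x z \<in> U"
  using assms unfolding good_def by meson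

lemma Max_meas:
  assumes "finite Q" "Q \<subseteq> F" "z \<in> S"
  shows "(\<lambda>\<omega>. Max ((\<lambda>p. p z \<omega>) ` Q)) \<in> borel_measurable M"
  by (rule borel_measurable_Max) (use assms meas in auto)

lemma Max_set:
  assumes "finite Q" "Q \<subseteq> F" "z \<in> S"
  shows "{\<omega> \<in> space M. Max ((\<lambda>p. p z \<omega>) ` Q) < eps} \<in> sets M"
  using Max_meas[OF assms] by measurable

lemma nb_mono:
  assumes "finite Q'" "Q \<noteq> {}" "Q \<subseteq> Q'" "Q' \<subseteq> F" "eps' \<le> eps" "lam' \<le> lam"
  shows "eps_lambda_nbhd M S Q' eps' lam' \<subseteq> eps_lambda_nbhd M S Q eps lam"
proof
  fix z assume z: "z \<in> eps_lambda_nbhd M S Q' eps' lam'"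
  hence zS: "z \<in> S" by (simp add: eps_lambda_nbhd_def)
  have fQ: "finite Q" using assms finite_subset by blast
  have "{\<omega> \<in> space M. Max ((\<lambda>p. p z \<omega>) ` Q') < eps'} \<subseteq> {\<omega> \<in> space M. Max ((\<lambda>p. p z \<omega>) ` Q) < eps}"
  proof safe
    fix \<omega> assume "\<omega> \<in> space M" "Max ((\<lambda>p. p z \<omega>) ` Q') < eps'"
    moreover have "Max ((\<lambda>p. p z \<omega>) ` Q) \<le> Max ((\<lambda>p. p z \<omega>) ` Q')"
      using assms fQ by (intro Max_mono) auto
    ultimately show "Max ((\<lambda>p. p z \<omega>) ` Q) < eps" using assms by linarith
  qed
  hence "measure M {\<omega> \<in> space M. Max ((\<lambda>p. p z \<omega>) ` Q') < eps'} \<le> measure M {\<omega> \<in> space M. Max ((\<lambda>p. p z \<omega>) ` Q) < eps}"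
    by (intro finite_measure_mono Max_set) (use assms fQ zS in auto)
  thus "z \<in> eps_lambda_nbhd M S Q eps lam" using z assms by (auto simp: eps_lambda_nbhd_def)
qed

lemma istop: "istopology good"
  unfolding istopology_def
proof safe
  fix U V assume U: "good U" and V: "good V"
  show "good (U \<inter> V)" unfolding good_def
  proof (intro conjI ballI)
    show "U \<inter> V \<subseteq> S" using U by (auto simp: good_def)
  next
    fix x assume x: "x \<in> U \<inter> V"
    obtain Q1 e1 l1 where 1: "finite Q1" "Q1 \<noteq> {}" "Q1 \<subseteq> F" "0 < e1" "0 < l1" "l1 < 1"
        "\<forall>z\<in>eps_lambda_nbhd M S Q1 e1 l1. add x z \<in> U" by (rule goodD[OF U IntD1[OF x]])
    obtain Q2 e2 l2 where 2: "finite Q2" "Q2 \<noteq> {}" "Q2 \<subseteq> F" "0 < e2" "0 < l2" "l2 < 1"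
        "\<forall>z\<in>eps_lambda_nbhd M S Q2 e2 l2. add x z \<in> V" by (rule goodD[OF V IntD2[OF x]])
    have s1: "eps_lambda_nbhd M S (Q1 \<union> Q2) (min e1 e2) (min l1 l2) \<subseteq> eps_lambda_nbhd M S Q1 e1 l1"
      by (rule nb_mono) (use 1 2 in auto)
    have s2: "eps_lambda_nbhd M S (Q1 \<union> Q2) (min e1 e2) (min l1 l2) \<subseteq> eps_lambda_nbhd M S Q2 e2 l2"
      by (rule nb_mono) (use 1 2 in auto)
    show "\<exists>Q eps lam. finite Q \<and> Q \<noteq> {} \<and> Q \<subseteq> F \<and> 0 < eps \<and> 0 < lam \<and> lam < 1 \<and>
        (\<forall>z\<in>eps_lambda_nbhd M S Q eps lam. add x z \<in> U \<inter> V)"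
      apply (rule exI[of _ "Q1 \<union> Q2"], rule exI[of _ "min e1 e2"], rule exI[of _ "min l1 l2"])
      apply (intro conjI)
      using 1(1) 2(1) apply (rule finite_UnI)
      using 1(2) apply blast
      using 1(3) 2(3) apply (rule Un_least)
      using 1(4) 2(4) apply simp
      using 1(5) 2(5) apply simp
      using 1(6) 2(6) apply simp
      using 1(7) 2(7) s1 s2 by blast
  qed
next
  fix K assume K: "\<forall>U\<in>K. good U"
  show "good (\<Union>K)" unfolding good_def
  proof (intro conjI ballI)
    show "\<Union>K \<subseteq> S" using K by (auto simp: good_def)
  next
    fix x assume "x \<in> \<Union>K"
    then obtain U where "U \<in> K" "x \<in> U" by blast
    then obtain Q eps lam where H: "finite Q" "Q \<noteq> {}" "Q \<subseteq> F" "0 < eps" "0 < lam" "lam < 1"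
        "\<forall>z\<in>eps_lambda_nbhd M S Q eps lam. add x z \<in> U"
      using goodD K by metis
    have "finite Q \<and> Q \<noteq> {} \<and> Q \<subseteq> F \<and> 0 < eps \<and> 0 < lam \<and> lam < 1 \<and>
        (\<forall>z\<in>eps_lambda_nbhd M S Q eps lam. add x z \<in> U)" using H by simp
    thus "\<exists>Q eps lam. finite Q \<and> Q \<noteq> {} \<and> Q \<subseteq> F \<and> 0 < eps \<and> 0 < lam \<and> lam < 1 \<and>
        (\<forall>z\<in>eps_lambda_nbhd M S Q eps lam. add x z \<in> \<Union>K)" using \<open>U \<in> K\<close> by blast
  qed
qed

lemma openin_T: "openin (eps_lambda_topology M S add F) U \<longleftrightarrow> good U"
  unfolding eps_lambda_topology_def good_def[symmetric]
  using istop by (simp add: topology_inverse')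

lemma good_S: "good S"
proof -
  obtain p where p: "p \<in> F" using Fne by blast
  show ?thesis unfolding good_def
    apply (intro conjI ballI, simp)
    apply (rule exI[of _ "{p}"], rule exI[of _ 1], rule exI[of _ "1/2"])
    using p add_closed by (auto simp: eps_lambda_nbhd_def)
qed

lemma topspace_T: "topspace (eps_lambda_topology M S add F) = S"
proof -
  have "openin (eps_lambda_topology M S add F) S" using good_S openin_T by blast
  moreover have "\<And>U. openin (eps_lambda_topology M S add F) U \<Longrightarrow> U \<subseteq> S"
    by (simp add: openin_T good_def)
  ultimately show ?thesis
    by (metis openin_subset openin_topspace subset_antisym)
qed


lemma half:
  assumes Q: "finite Q" "Q \<noteq> {}" "Q \<subseteq> F" and e: "0 < e"
    and a: "a \<in> eps_lambda_nbhd M S Q (e/2) (l/2)" and b: "b \<in> eps_lambda_nbhd M S Q (e/2) (l/2)"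
  shows "add a b \<in> eps_lambda_nbhd M S Q e l"
proof -
  have aS: "a \<in> S" and bS: "b \<in> S" using a b by (auto simp: eps_lambda_nbhd_def)
  define A where "A = {\<omega> \<in> space M. Max ((\<lambda>p. p a \<omega>) ` Q) < e/2}"
  define B where "B = {\<omega> \<in> space M. Max ((\<lambda>p. p b \<omega>) ` Q) < e/2}"
  define C where "C = {\<omega> \<in> space M. Max ((\<lambda>p. p (add a b) \<omega>) ` Q) < e}"
  have abS: "add a b \<in> S" using aS bS add_closed by blast
  have As: "A \<in> sets M" unfolding A_def using Q aS by (intro Max_set) auto
  have Bs: "B \<in> sets M" unfolding B_def using Q bS by (intro Max_set) auto
  have Cs: "C \<in> sets M" unfolding C_def using Q abS by (intro Max_set) auto
  have mA: "measure M A > 1 - l/2" using a by (simp add: eps_lambda_nbhd_def A_def)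
  have mB: "measure M B > 1 - l/2" using b by (simp add: eps_lambda_nbhd_def B_def)
  have AEt: "AE \<omega> in M. \<forall>p\<in>Q. p (add a b) \<omega> \<le> p a \<omega> + p b \<omega>"
    using Q aS bS by (intro AE_finite_allI) (auto intro: tri)
  have "AE \<omega> in M. \<omega> \<in> A \<inter> B \<longrightarrow> \<omega> \<in> C"
    using AEt
  proof eventually_elim
    case (elim \<omega>)
    show ?case
    proof
      assume w: "\<omega> \<in> A \<inter> B"
      have "\<forall>p\<in>Q. p (add a b) \<omega> < e"
      proof
        fix p assume p: "p \<in> Q"
        have "p a \<omega> \<le> Max ((\<lambda>p. p a \<omega>) ` Q)" "p b \<omega> \<le> Max ((\<lambda>p. p b \<omega>) ` Q)"
          using Q p by (auto intro: Max_ge)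
        thus "p (add a b) \<omega> < e" using w elim p by (auto simp: A_def B_def)
      qed
      thus "\<omega> \<in> C" using w Q by (auto simp: C_def A_def)
    qed
  qed
  hence "measure M (A \<inter> B) \<le> measure M C"
    by (rule finite_measure_mono_AE) (rule Cs)
  moreover have "measure M (A \<union> B) = measure M A + measure M B - measure M (A \<inter> B)"
    using As Bs by (intro measure_Un3) (auto simp: fmeasurable_eq_sets)
  moreover have "measure M (A \<union> B) \<le> 1" by simp
  ultimately have "measure M C > 1 - l" using mA mB by linarith
  thus ?thesis using abS by (simp add: eps_lambda_nbhd_def C_def)
qed

lemma zero_nb:
  assumes Q: "finite Q" "Q \<noteq> {}" "Q \<subseteq> F" and e: "0 < e" and l: "0 < l"
  shows "zero \<in> eps_lambda_nbhd M S Q e l"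
proof -
  have "AE \<omega> in M. \<forall>p\<in>Q. p zero \<omega> = 0"
    using Q by (intro AE_finite_allI) (auto intro: pzero)
  hence AE1: "AE \<omega> in M. \<omega> \<in> space M \<longleftrightarrow> \<omega> \<in> {\<omega> \<in> space M. Max ((\<lambda>p. p zero \<omega>) ` Q) < e}"
  proof eventually_elim
    case (elim \<omega>)
    have "(\<lambda>p. p zero \<omega>) ` Q = {0}" using elim Q by auto
    thus ?case using e by auto
  qed
  have S1: "{\<omega> \<in> space M. Max ((\<lambda>p. p zero \<omega>) ` Q) < e} \<in> sets M"
    by (rule Max_set) (use Q zero_in in auto)
  have "measure M (space M) = measure M {\<omega> \<in> space M. Max ((\<lambda>p. p zero \<omega>) ` Q) < e}"
    using AE1 sets.top S1 by (rule measure_eq_AE)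
  thus ?thesis using zero_in l unfolding eps_lambda_nbhd_def by (simp add: prob_space)
qed

lemma interior_nb:
  assumes x: "x \<in> S" and Q: "finite Q" "Q \<noteq> {}" "Q \<subseteq> F" and e: "0 < e" and l: "0 < l" "l < 1"
  shows "\<exists>W. good W \<and> x \<in> W \<and> W \<subseteq> add x ` eps_lambda_nbhd M S Q e l"
proof -
  define T where "T = add x ` eps_lambda_nbhd M S Q e l"
  define W where "W = {y \<in> S. \<exists>Q' e' l'. finite Q' \<and> Q' \<noteq> {} \<and> Q' \<subseteq> F \<and> 0 < e' \<and> 0 < l' \<and> l' < 1 \<and>
        (\<forall>z\<in>eps_lambda_nbhd M S Q' e' l'. add y z \<in> T)}"
  have "good W" unfolding good_def
  proof (intro conjI ballI)
    show "W \<subseteq> S" by (auto simp: W_def)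
  next
    fix y assume "y \<in> W"
    then obtain Q' e' l' where y: "y \<in> S" and H: "finite Q'" "Q' \<noteq> {}" "Q' \<subseteq> F" "0 < e'" "0 < l'" "l' < 1"
        "\<forall>z\<in>eps_lambda_nbhd M S Q' e' l'. add y z \<in> T"
      unfolding W_def by blast
    have "\<forall>w\<in>eps_lambda_nbhd M S Q' (e'/2) (l'/2). add y w \<in> W"
    proof
      fix w assume w: "w \<in> eps_lambda_nbhd M S Q' (e'/2) (l'/2)"
      hence wS: "w \<in> S" by (simp add: eps_lambda_nbhd_def)
      have "\<forall>z\<in>eps_lambda_nbhd M S Q' (e'/2) (l'/2). add (add y w) z \<in> T"
      proof
        fix z assume z: "z \<in> eps_lambda_nbhd M S Q' (e'/2) (l'/2)"
        hence zS: "z \<in> S" by (simp add: eps_lambda_nbhd_def)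
        have "add w z \<in> eps_lambda_nbhd M S Q' e' l'" using half[OF H(1-4) w z] .
        hence "add y (add w z) \<in> T" using H(7) by blast
        thus "add (add y w) z \<in> T" using assoc[OF y wS zS] by simp
      qed
      moreover have "add y w \<in> S" using y wS add_closed by blast
      ultimately show "add y w \<in> W" unfolding W_def using H by (intro CollectI conjI exI[of _ Q'] exI[of _ "e'/2"] exI[of _ "l'/2"]) auto
    qed
    thus "\<exists>Q eps lam. finite Q \<and> Q \<noteq> {} \<and> Q \<subseteq> F \<and> 0 < eps \<and> 0 < lam \<and> lam < 1 \<and>
        (\<forall>z\<in>eps_lambda_nbhd M S Q eps lam. add y z \<in> W)"
      using H by (intro exI[of _ Q'] exI[of _ "e'/2"] exI[of _ "l'/2"]) auto
  qed
  moreover have "x \<in> W" unfolding W_def T_def using x Q e l by blast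
  moreover have "W \<subseteq> T"
  proof
    fix y assume "y \<in> W"
    then obtain Q' e' l' where y: "y \<in> S" and H: "finite Q'" "Q' \<noteq> {}" "Q' \<subseteq> F" "0 < e'" "0 < l'" "l' < 1"
        "\<forall>z\<in>eps_lambda_nbhd M S Q' e' l'. add y z \<in> T"
      unfolding W_def by blast
    have "add y zero \<in> T" using H zero_nb[OF H(1-5)] by blast
    thus "y \<in> T" using add_zero[OF y] by simp
  qed
  ultimately show ?thesis unfolding T_def by blast
qed

end

definition negm :: "(('w \<Rightarrow> 'k::{real_normed_field,banach}) \<Rightarrow> 'e \<Rightarrow> 'e) \<Rightarrow> 'e \<Rightarrow> 'e" where
  "negm smul x = smul (\<lambda>_. -1) x"

locale l0m = prob_space M for M :: "'w measure" +
  fixes E :: "'e set" and add :: "'e \<Rightarrow> 'e \<Rightarrow> 'e" and zero :: 'e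
    and smul :: "('w \<Rightarrow> 'k::{real_normed_field,banach}) \<Rightarrow> 'e \<Rightarrow> 'e"
  assumes modl: "L0_module M E add zero smul"
begin

lemmas mp = modl[unfolded L0_module_def]
lemmas c0 = conjunct1[OF mp]
lemmas c1 = conjunct1[OF conjunct2[OF mp]]
lemmas c2 = conjunct1[OF conjunct2[OF conjunct2[OF mp]]]
lemmas c3 = conjunct1[OF conjunct2[OF conjunct2[OF conjunct2[OF mp]]]]
lemmas c4 = conjunct1[OF conjunct2[OF conjunct2[OF conjunct2[OF conjunct2[OF mp]]]]]
lemmas c5 = conjunct1[OF conjunct2[OF conjunct2[OF conjunct2[OF conjunct2[OF conjunct2[OF mp]]]]]]
lemmas c6 = conjunct1[OF conjunct2[OF conjunct2[OF conjunct2[OF conjunct2[OF conjunct2[OF conjunct2[OF mp]]]]]]]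
lemmas c7 = conjunct1[OF conjunct2[OF conjunct2[OF conjunct2[OF conjunct2[OF conjunct2[OF conjunct2[OF conjunct2[OF mp]]]]]]]]
lemmas c8 = conjunct1[OF conjunct2[OF conjunct2[OF conjunct2[OF conjunct2[OF conjunct2[OF conjunct2[OF conjunct2[OF conjunct2[OF mp]]]]]]]]]
lemmas c9 = conjunct1[OF conjunct2[OF conjunct2[OF conjunct2[OF conjunct2[OF conjunct2[OF conjunct2[OF conjunct2[OF conjunct2[OF conjunct2[OF mp]]]]]]]]]]
lemmas c10 = conjunct1[OF conjunct2[OF conjunct2[OF conjunct2[OF conjunct2[OF conjunct2[OF conjunct2[OF conjunct2[OF conjunct2[OF conjunct2[OF conjunct2[OF mp]]]]]]]]]]]
lemmas c11 = conjunct2[OF conjunct2[OF conjunct2[OF conjunct2[OF conjunct2[OF conjunct2[OF conjunct2[OF conjunct2[OF conjunct2[OF conjunct2[OF conjunct2[OF mp]]]]]]]]]]]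
lemmas zero_in = c0[rule_format]
lemmas add_c = c1[rule_format]
lemmas smul_c = c2[rule_format]
lemmas assoc = c3[rule_format]
lemmas comm = c4[rule_format]
lemmas lid = c5[rule_format]
lemmas invex = c6[rule_format]
lemmas smul_ae = c7[rule_format]
lemmas distr1 = c8[rule_format]
lemmas distr2 = c9[rule_format]
lemmas smul_mult = c10[rule_format]
lemmas smul_one = c11[rule_format]

lemma rid: "x \<in> E \<Longrightarrow> add x zero = x" using comm[OF _ zero_in] lid by simp

lemma const_meas: "(\<lambda>_. c) \<in> borel_measurable M" by simp

lemma smul0: assumes x: "x \<in> E" shows "smul (\<lambda>_. 0) x = zero"
proof -
  define s where "s = smul (\<lambda>_. 0) x"
  have sE: "s \<in> E" unfolding s_def using x by (intro smul_c) auto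
  have "smul (\<lambda>\<omega>. (\<lambda>_. 0) \<omega> + (\<lambda>_. 0) \<omega>) x = add s s"
    unfolding s_def by (rule distr2) (use x in auto)
  hence ss: "add s s = s" unfolding s_def by simp
  obtain y where y: "y \<in> E" "add s y = zero" using invex[OF sE] by blast
  have "zero = add (add s s) y" using ss y by simp
  also have "\<dots> = add s zero" using assoc[OF sE sE y(1)] y by simp
  also have "\<dots> = s" using rid[OF sE] .
  finally show ?thesis unfolding s_def by simp
qed

lemma neg_c: "x \<in> E \<Longrightarrow> negm smul x \<in> E" unfolding negm_def by (intro smul_c) auto

lemma add_neg: assumes x: "x \<in> E" shows "add x (negm smul x) = zero"
proof -
  have "smul (\<lambda>\<omega>. (\<lambda>_. 1) \<omega> + (\<lambda>_. -1) \<omega>) x = add (smul (\<lambda>_. 1) x) (smul (\<lambda>_. -1) x)"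
    by (rule distr2) (use x in auto)
  thus ?thesis using smul0[OF x] smul_one[OF x] by (simp add: negm_def)
qed

lemma neg_add: "x \<in> E \<Longrightarrow> y \<in> E \<Longrightarrow> negm smul (add x y) = add (negm smul x) (negm smul y)"
  unfolding negm_def by (rule distr1) auto

lemma neg_neg: assumes x: "x \<in> E" shows "negm smul (negm smul x) = x"
proof -
  have "smul (\<lambda>\<omega>. (\<lambda>_. -1) \<omega> * (\<lambda>_. -1) \<omega>) x = smul (\<lambda>_. -1) (smul (\<lambda>_. -1) x)"
    by (rule smul_mult) (use x in auto)
  thus ?thesis using smul_one[OF x] by (simp add: negm_def)
qed

lemma neg_zero: "negm smul zero = zero"
proof -
  have "smul (\<lambda>\<omega>. (\<lambda>_. -1) \<omega> * (\<lambda>_. 0) \<omega>) zero = smul (\<lambda>_. -1) (smul (\<lambda>_. 0) zero)"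
    by (rule smul_mult) (use zero_in in auto)
  thus ?thesis using smul0[OF zero_in] by (simp add: negm_def)
qed

lemma neg_smul: assumes xi: "\<xi> \<in> borel_measurable M" and x: "x \<in> E"
  shows "negm smul (smul \<xi> x) = smul \<xi> (negm smul x)"
proof -
  have "smul (\<lambda>\<omega>. (\<lambda>_. -1) \<omega> * \<xi> \<omega>) x = smul (\<lambda>_. -1) (smul \<xi> x)"
    by (rule smul_mult) (use x xi in auto)
  moreover have "smul (\<lambda>\<omega>. \<xi> \<omega> * (\<lambda>_. -1) \<omega>) x = smul \<xi> (smul (\<lambda>_. -1) x)"
    by (rule smul_mult) (use x xi in auto)
  moreover have "(\<lambda>\<omega>. (\<lambda>_. -1) \<omega> * \<xi> \<omega>) = (\<lambda>\<omega>. \<xi> \<omega> * (\<lambda>_. -1) \<omega>)" by simp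
  ultimately show ?thesis by (simp add: negm_def)
qed

lemma swap: assumes "a \<in> E" "b \<in> E" "c \<in> E" "d \<in> E"
  shows "add (add a b) (add c d) = add (add a c) (add b d)"
proof -
  have "add (add a b) (add c d) = add a (add b (add c d))" using assms by (simp add: assoc add_c)
  also have "add b (add c d) = add c (add b d)"
  proof -
    have "add b (add c d) = add (add b c) d" using assms by (simp add: assoc)
    also have "add b c = add c b" using assms by (simp add: comm)
    also have "add (add c b) d = add c (add b d)" using assms by (simp add: assoc)
    finally show ?thesis .
  qed
  also have "add a (add c (add b d)) = add (add a c) (add b d)" using assms by (simp add: assoc add_c)
  finally show ?thesis .
qed

end

definition qcls :: "'w measure \<Rightarrow> 'e set \<Rightarrow> ('e \<Rightarrow> 'e \<Rightarrow> 'e) \<Rightarrow>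
   (('w \<Rightarrow> 'k::{real_normed_field,banach}) \<Rightarrow> 'e \<Rightarrow> 'e) \<Rightarrow> ('e \<Rightarrow> 'w \<Rightarrow> real) \<Rightarrow> 'e \<Rightarrow> 'e set" where
  "qcls M E add smul n x = {y \<in> E. AE \<omega> in M. n (add x (negm smul y)) \<omega> = 0}"

definition qrep :: "'e set \<Rightarrow> 'e" where "qrep c = (SOME x. x \<in> c)"

definition qadd :: "'w measure \<Rightarrow> 'e set \<Rightarrow> ('e \<Rightarrow> 'e \<Rightarrow> 'e) \<Rightarrow>
   (('w \<Rightarrow> 'k::{real_normed_field,banach}) \<Rightarrow> 'e \<Rightarrow> 'e) \<Rightarrow> ('e \<Rightarrow> 'w \<Rightarrow> real) \<Rightarrow> 'e set \<Rightarrow> 'e set \<Rightarrow> 'e set" where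
  "qadd M E add smul n c d = qcls M E add smul n (add (qrep c) (qrep d))"

definition qsmul :: "'w measure \<Rightarrow> 'e set \<Rightarrow> ('e \<Rightarrow> 'e \<Rightarrow> 'e) \<Rightarrow>
   (('w \<Rightarrow> 'k::{real_normed_field,banach}) \<Rightarrow> 'e \<Rightarrow> 'e) \<Rightarrow> ('e \<Rightarrow> 'w \<Rightarrow> real) \<Rightarrow> ('w \<Rightarrow> 'k) \<Rightarrow> 'e set \<Rightarrow> 'e set" where
  "qsmul M E add smul n \<xi> c = qcls M E add smul n (smul \<xi> (qrep c))"

definition qnm :: "('e \<Rightarrow> 'w \<Rightarrow> real) \<Rightarrow> 'e set \<Rightarrow> 'w \<Rightarrow> real" where
  "qnm n c = n (qrep c)"

locale qm = l0m M E add zero smul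
  for M :: "'w measure" and E :: "'e set" and add zero
    and smul :: "('w \<Rightarrow> 'k::{real_normed_field,banach}) \<Rightarrow> 'e \<Rightarrow> 'e" +
  fixes n :: "'e \<Rightarrow> 'w \<Rightarrow> real"
  assumes semi: "L0_seminorm M E add smul n"
begin

lemmas sp = semi[unfolded L0_seminorm_def]
lemma n_meas: "x \<in> E \<Longrightarrow> n x \<in> borel_measurable M" using sp by blast
lemma n_nonneg: "x \<in> E \<Longrightarrow> AE \<omega> in M. 0 \<le> n x \<omega>" using sp by blast
lemmas n_hom = conjunct1[OF conjunct2[OF sp], rule_format]
lemmas n_tri = conjunct2[OF conjunct2[OF sp], rule_format]

abbreviation "cls \<equiv> qcls M E add smul n"
definition rel where "rel x y \<longleftrightarrow> (AE \<omega> in M. n (add x (negm smul y)) \<omega> = 0)"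

lemma n_zero: "AE \<omega> in M. n zero \<omega> = 0"
proof -
  have "AE \<omega> in M. n (smul (\<lambda>_. 0) zero) \<omega> = norm ((\<lambda>_. 0) \<omega>) * n zero \<omega>"
    using n_hom[of "\<lambda>_. 0" zero] zero_in by simp
  thus ?thesis using smul0[OF zero_in] by simp
qed

lemma n_neg: assumes "x \<in> E" shows "AE \<omega> in M. n (negm smul x) \<omega> = n x \<omega>"
  using n_hom[of "\<lambda>_. -1" x] assms by (simp add: negm_def)

lemma rel_refl: "x \<in> E \<Longrightarrow> rel x x"
  unfolding rel_def using n_zero by (simp add: add_neg)

lemma rel_sym: assumes x: "x \<in> E" and y: "y \<in> E" and r: "rel x y" shows "rel y x"
proof -
  have e: "negm smul (add x (negm smul y)) = add y (negm smul x)"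
    using x y by (simp add: neg_add neg_c neg_neg comm)
  have "AE \<omega> in M. n (negm smul (add x (negm smul y))) \<omega> = n (add x (negm smul y)) \<omega>"
    using x y by (intro n_neg add_c neg_c)
  thus ?thesis using r unfolding rel_def e by eventually_elim simp
qed

lemma rel_trans: assumes x: "x \<in> E" and y: "y \<in> E" and z: "z \<in> E" and r1: "rel x y" and r2: "rel y z"
  shows "rel x z"
proof -
  have "add (add x (negm smul y)) (add y (negm smul z)) = add x (add (add (negm smul y) y) (negm smul z))"
    using x y z by (simp add: assoc add_c neg_c)
  also have "add (negm smul y) y = zero" using y by (simp add: comm neg_c add_neg)
  also have "add x (add zero (negm smul z)) = add x (negm smul z)" using z by (simp add: lid neg_c)
  finally have e: "add (add x (negm smul y)) (add y (negm smul z)) = add x (negm smul z)" .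
  have "AE \<omega> in M. n (add (add x (negm smul y)) (add y (negm smul z))) \<omega> \<le> n (add x (negm smul y)) \<omega> + n (add y (negm smul z)) \<omega>"
    using x y z by (intro n_tri add_c neg_c)
  moreover have "AE \<omega> in M. 0 \<le> n (add x (negm smul z)) \<omega>" using x z by (intro n_nonneg add_c neg_c)
  ultimately show ?thesis using r1 r2 unfolding rel_def e by eventually_elim simp
qed

lemma mem_cls: "y \<in> cls x \<longleftrightarrow> y \<in> E \<and> rel x y"
  by (simp add: qcls_def rel_def)

lemma cls_eq: assumes x: "x \<in> E" and y: "y \<in> E" shows "cls x = cls y \<longleftrightarrow> rel x y"
proof
  assume "cls x = cls y"
  moreover have "y \<in> cls y" using y rel_refl mem_cls by blast
  ultimately show "rel x y" using mem_cls by blast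
next
  assume r: "rel x y"
  show "cls x = cls y"
  proof (intro set_eqI iffI)
    fix z assume "z \<in> cls x" thus "z \<in> cls y" using r x y rel_sym rel_trans mem_cls by meson
  next
    fix z assume "z \<in> cls y" thus "z \<in> cls x" using r x y rel_trans mem_cls by meson
  qed
qed

lemma rep_cls: assumes x: "x \<in> E" shows "qrep (cls x) \<in> E" "rel x (qrep (cls x))" "cls (qrep (cls x)) = cls x"
proof -
  have "x \<in> cls x" using x rel_refl mem_cls by blast
  hence "qrep (cls x) \<in> cls x" unfolding qrep_def by (rule someI)
  thus 1: "qrep (cls x) \<in> E" "rel x (qrep (cls x))" using mem_cls by auto
  thus "cls (qrep (cls x)) = cls x" using x cls_eq rel_sym by metis
qed

lemma n_cong: assumes x: "x \<in> E" and y: "y \<in> E" and r: "rel x y" shows "AE \<omega> in M. n x \<omega> = n y \<omega>"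
proof -
  have e1: "add (add x (negm smul y)) y = x"
    using x y by (simp add: assoc neg_c comm[of "negm smul y" y] add_neg rid)
  have e2: "add (add y (negm smul x)) x = y"
    using x y by (simp add: assoc neg_c comm[of "negm smul x" x] add_neg rid)
  have r': "rel y x" using rel_sym x y r by blast
  have "AE \<omega> in M. n (add (add x (negm smul y)) y) \<omega> \<le> n (add x (negm smul y)) \<omega> + n y \<omega>"
    using x y by (intro n_tri add_c neg_c)
  moreover have "AE \<omega> in M. n (add (add y (negm smul x)) x) \<omega> \<le> n (add y (negm smul x)) \<omega> + n x \<omega>"
    using x y by (intro n_tri add_c neg_c)
  ultimately show ?thesis using r r' unfolding rel_def e1 e2 by eventually_elim simp
qed

lemma rel_add: assumes "x \<in> E" "x' \<in> E" "y \<in> E" "y' \<in> E" "rel x x'" "rel y y'"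
  shows "rel (add x y) (add x' y')"
proof -
  have e: "add (add x y) (negm smul (add x' y')) = add (add x (negm smul x')) (add y (negm smul y'))"
    using assms by (simp add: neg_add swap neg_c)
  have "AE \<omega> in M. n (add (add x (negm smul x')) (add y (negm smul y'))) \<omega> \<le> n (add x (negm smul x')) \<omega> + n (add y (negm smul y')) \<omega>"
    using assms by (intro n_tri add_c neg_c)
  moreover have "AE \<omega> in M. 0 \<le> n (add (add x y) (negm smul (add x' y'))) \<omega>"
    using assms by (intro n_nonneg add_c neg_c)
  ultimately show ?thesis using assms(5,6) unfolding rel_def e by eventually_elim simp
qed

lemma rel_smul: assumes xi: "\<xi> \<in> borel_measurable M" and "x \<in> E" "x' \<in> E" "rel x x'"
  shows "rel (smul \<xi> x) (smul \<xi> x')"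
proof -
  have e: "add (smul \<xi> x) (negm smul (smul \<xi> x')) = smul \<xi> (add x (negm smul x'))"
    using assms by (simp add: neg_smul distr1 neg_c)
  have "AE \<omega> in M. n (smul \<xi> (add x (negm smul x'))) \<omega> = norm (\<xi> \<omega>) * n (add x (negm smul x')) \<omega>"
    using assms by (intro n_hom add_c neg_c)
  thus ?thesis using assms(4) unfolding rel_def e by eventually_elim simp
qed

lemma cls_E: "x \<in> E \<Longrightarrow> y \<in> cls x \<Longrightarrow> y \<in> E" by (simp add: mem_cls)

lemma qadd_cls: assumes "x \<in> E" "y \<in> E"
  shows "qadd M E add smul n (cls x) (cls y) = cls (add x y)"
proof -
  have "rel (add x y) (add (qrep (cls x)) (qrep (cls y)))"
    using assms rep_cls by (intro rel_add) auto
  thus ?thesis unfolding qadd_def using assms rep_cls cls_eq add_c rel_sym by metis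
qed

lemma qsmul_cls: assumes xi: "\<xi> \<in> borel_measurable M" and x: "x \<in> E"
  shows "qsmul M E add smul n \<xi> (cls x) = cls (smul \<xi> x)"
proof -
  have "rel (smul \<xi> x) (smul \<xi> (qrep (cls x)))"
    using assms rep_cls by (intro rel_smul) auto
  thus ?thesis unfolding qsmul_def using assms rep_cls cls_eq smul_c rel_sym by metis
qed

lemma qnm_cls: assumes x: "x \<in> E" shows "AE \<omega> in M. qnm n (cls x) \<omega> = n x \<omega>"
  unfolding qnm_def using n_cong[OF rep_cls(1)[OF x] x] rep_cls(2)[OF x] rel_sym x rep_cls(1)[OF x]
  by blast


lemma quot_module: "L0_module M (cls ` E) (qadd M E add smul n) (cls zero) (qsmul M E add smul n)"
  unfolding L0_module_def
proof (intro conjI ballI impI)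
  show "cls zero \<in> cls ` E" using zero_in by blast
next
  fix c d assume "c \<in> cls ` E" "d \<in> cls ` E"
  then obtain x y where "x \<in> E" "y \<in> E" "c = cls x" "d = cls y" by blast
  thus "qadd M E add smul n c d \<in> cls ` E" by (simp add: qadd_cls add_c)
next
  fix \<xi> :: "'w \<Rightarrow> 'k" and c assume "\<xi> \<in> borel_measurable M" "c \<in> cls ` E"
  then obtain x where "x \<in> E" "c = cls x" by blast
  thus "qsmul M E add smul n \<xi> c \<in> cls ` E" using \<open>\<xi> \<in> borel_measurable M\<close> by (simp add: qsmul_cls smul_c)
next
  fix c d e assume "c \<in> cls ` E" "d \<in> cls ` E" "e \<in> cls ` E"
  then obtain x y z where "x \<in> E" "y \<in> E" "z \<in> E" "c = cls x" "d = cls y" "e = cls z" by blast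
  thus "qadd M E add smul n (qadd M E add smul n c d) e = qadd M E add smul n c (qadd M E add smul n d e)"
    by (simp add: qadd_cls add_c assoc)
next
  fix c d assume "c \<in> cls ` E" "d \<in> cls ` E"
  then obtain x y where "x \<in> E" "y \<in> E" "c = cls x" "d = cls y" by blast
  thus "qadd M E add smul n c d = qadd M E add smul n d c" by (simp add: qadd_cls comm)
next
  fix c assume "c \<in> cls ` E"
  then obtain x where "x \<in> E" "c = cls x" by blast
  thus "qadd M E add smul n (cls zero) c = c" by (simp add: qadd_cls zero_in lid)
next
  fix c assume "c \<in> cls ` E"
  then obtain x where x: "x \<in> E" "c = cls x" by blast
  hence "qadd M E add smul n c (cls (negm smul x)) = cls zero" by (simp add: qadd_cls neg_c add_neg)
  moreover have "cls (negm smul x) \<in> cls ` E" using x neg_c by blast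
  ultimately show "\<exists>d\<in>cls ` E. qadd M E add smul n c d = cls zero" by blast
next
  fix \<xi> \<eta> :: "'w \<Rightarrow> 'k" and c assume m: "\<xi> \<in> borel_measurable M" "\<eta> \<in> borel_measurable M" "c \<in> cls ` E"
    and ae: "AE \<omega> in M. \<xi> \<omega> = \<eta> \<omega>"
  then obtain x where x: "x \<in> E" "c = cls x" by blast
  have "qrep c \<in> E" using x rep_cls by simp
  thus "qsmul M E add smul n \<xi> c = qsmul M E add smul n \<eta> c"
    unfolding qsmul_def using smul_ae[OF m(1,2) _ ae] by simp
next
  fix \<xi> :: "'w \<Rightarrow> 'k" and c d assume m: "\<xi> \<in> borel_measurable M" "c \<in> cls ` E" "d \<in> cls ` E"
  then obtain x y where "x \<in> E" "y \<in> E" "c = cls x" "d = cls y" by blast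
  thus "qsmul M E add smul n \<xi> (qadd M E add smul n c d) =
       qadd M E add smul n (qsmul M E add smul n \<xi> c) (qsmul M E add smul n \<xi> d)"
    using m(1) by (simp add: qadd_cls qsmul_cls add_c smul_c distr1)
next
  fix \<xi> \<eta> :: "'w \<Rightarrow> 'k" and c assume m: "\<xi> \<in> borel_measurable M" "\<eta> \<in> borel_measurable M" "c \<in> cls ` E"
  then obtain x where x: "x \<in> E" "c = cls x" by blast
  have r: "qrep c \<in> E" "cls (qrep c) = c" using x rep_cls by auto
  show "qsmul M E add smul n (\<lambda>\<omega>. \<xi> \<omega> + \<eta> \<omega>) c =
       qadd M E add smul n (qsmul M E add smul n \<xi> c) (qsmul M E add smul n \<eta> c)"
    unfolding qsmul_def using distr2[OF m(1,2) r(1)] qadd_cls[OF smul_c[OF m(1) r(1)] smul_c[OF m(2) r(1)]]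
    by simp
next
  fix \<xi> \<eta> :: "'w \<Rightarrow> 'k" and c assume m: "\<xi> \<in> borel_measurable M" "\<eta> \<in> borel_measurable M" "c \<in> cls ` E"
  then obtain x where x: "x \<in> E" "c = cls x" by blast
  have r: "qrep c \<in> E" "cls (qrep c) = c" using x rep_cls by auto
  show "qsmul M E add smul n (\<lambda>\<omega>. \<xi> \<omega> * \<eta> \<omega>) c =
       qsmul M E add smul n \<xi> (qsmul M E add smul n \<eta> c)"
  proof -
    have 1: "qsmul M E add smul n \<eta> c = cls (smul \<eta> (qrep c))" by (simp add: qsmul_def)
    have 2: "qsmul M E add smul n (\<lambda>\<omega>. \<xi> \<omega> * \<eta> \<omega>) c = cls (smul \<xi> (smul \<eta> (qrep c)))"
      unfolding qsmul_def using smul_mult[OF m(1,2) r(1)] by simp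
    show ?thesis unfolding 1 2 using qsmul_cls[OF m(1) smul_c[OF m(2) r(1)]] by simp
  qed
next
  fix c assume "c \<in> cls ` E"
  then obtain x where x: "x \<in> E" "c = cls x" by blast
  have "(\<lambda>\<omega>. 1) \<in> borel_measurable M" by simp
  thus "qsmul M E add smul n (\<lambda>\<omega>. 1) c = c" using x by (simp add: qsmul_cls smul_one)
qed

lemma quot_norm: "L0_norm M (cls ` E) (qadd M E add smul n) (cls zero) (qsmul M E add smul n) (qnm n)"
  unfolding L0_norm_def L0_seminorm_def
proof (intro conjI ballI impI)
  fix c assume "c \<in> cls ` E"
  then obtain x where x: "x \<in> E" "c = cls x" by blast
  have r: "qrep c \<in> E" using x rep_cls by simp
  show "qnm n c \<in> borel_measurable M" unfolding qnm_def using r by (rule n_meas)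
  show "AE \<omega> in M. 0 \<le> qnm n c \<omega>" unfolding qnm_def using r by (rule n_nonneg)
next
  fix \<xi> :: "'w \<Rightarrow> 'k" and c assume m: "\<xi> \<in> borel_measurable M" "c \<in> cls ` E"
  then obtain x where x: "x \<in> E" "c = cls x" by blast
  have "AE \<omega> in M. qnm n (cls (smul \<xi> x)) \<omega> = n (smul \<xi> x) \<omega>" using x m by (intro qnm_cls smul_c)
  moreover have "AE \<omega> in M. n (smul \<xi> x) \<omega> = norm (\<xi> \<omega>) * n x \<omega>" using x m by (intro n_hom)
  moreover have "AE \<omega> in M. qnm n (cls x) \<omega> = n x \<omega>" using x by (intro qnm_cls)
  ultimately show "AE \<omega> in M. qnm n (qsmul M E add smul n \<xi> c) \<omega> = norm (\<xi> \<omega>) * qnm n c \<omega>"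
    by eventually_elim (use x m in \<open>simp add: qsmul_cls\<close>)
next
  fix c d assume m: "c \<in> cls ` E" "d \<in> cls ` E"
  then obtain x y where x: "x \<in> E" "y \<in> E" "c = cls x" "d = cls y" by blast
  have "AE \<omega> in M. qnm n (cls (add x y)) \<omega> = n (add x y) \<omega>" using x by (intro qnm_cls add_c)
  moreover have "AE \<omega> in M. n (add x y) \<omega> \<le> n x \<omega> + n y \<omega>" using x by (intro n_tri)
  moreover have "AE \<omega> in M. qnm n (cls x) \<omega> = n x \<omega>" using x by (intro qnm_cls)
  moreover have "AE \<omega> in M. qnm n (cls y) \<omega> = n y \<omega>" using x by (intro qnm_cls)
  ultimately show "AE \<omega> in M. qnm n (qadd M E add smul n c d) \<omega> \<le> qnm n c \<omega> + qnm n d \<omega>"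
    by eventually_elim (use x in \<open>simp add: qadd_cls\<close>)
next
  fix c assume m: "c \<in> cls ` E" and z: "AE \<omega> in M. qnm n c \<omega> = 0"
  then obtain x where x: "x \<in> E" "c = cls x" by blast
  have "AE \<omega> in M. qnm n (cls x) \<omega> = n x \<omega>" using x by (intro qnm_cls)
  hence "AE \<omega> in M. n (add x (negm smul zero)) \<omega> = 0" using z
    by eventually_elim (use x in \<open>simp add: neg_zero rid\<close>)
  hence "rel x zero" unfolding rel_def .
  thus "c = cls zero" using x cls_eq zero_in by simp
qed

end

context qm
begin

lemma qnm_meas: assumes z: "z \<in> E" shows "qnm n (cls z) \<in> borel_measurable M"
  unfolding qnm_def by (rule n_meas[OF rep_cls(1)[OF z]])

lemma measure_qnm:
  assumes z: "z \<in> E"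
  shows "measure M {\<omega> \<in> space M. qnm n (cls z) \<omega> < e} = measure M {\<omega> \<in> space M. n z \<omega> < e}"
proof (rule measure_eq_AE)
  show "AE \<omega> in M. (\<omega> \<in> {\<omega> \<in> space M. qnm n (cls z) \<omega> < e}) = (\<omega> \<in> {\<omega> \<in> space M. n z \<omega> < e})"
    using qnm_cls[OF z] by (rule eventually_mono) simp
  show "{\<omega> \<in> space M. qnm n (cls z) \<omega> < e} \<in> sets M" using qnm_meas[OF z] by measurable
  show "{\<omega> \<in> space M. n z \<omega> < e} \<in> sets M" using n_meas[OF z] by measurable
qed

end

lemma semi_meas: "L0_seminorm M E add smul n \<Longrightarrow> x \<in> E \<Longrightarrow> n x \<in> borel_measurable M"
  unfolding L0_seminorm_def by blast
lemma semi_nonneg: "L0_seminorm M E add smul n \<Longrightarrow> x \<in> E \<Longrightarrow> AE \<omega> in M. 0 \<le> n x \<omega>"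
  unfolding L0_seminorm_def by blast
lemma semi_hom: "L0_seminorm M E add smul n \<Longrightarrow> \<xi> \<in> borel_measurable M \<Longrightarrow> x \<in> E \<Longrightarrow>
   AE \<omega> in M. n (smul \<xi> x) \<omega> = norm (\<xi> \<omega>) * n x \<omega>"
  unfolding L0_seminorm_def by blast
lemma semi_tri: "L0_seminorm M E add smul n \<Longrightarrow> x \<in> E \<Longrightarrow> y \<in> E \<Longrightarrow>
   AE \<omega> in M. n (add x y) \<omega> \<le> n x \<omega> + n y \<omega>"
  unfolding L0_seminorm_def by blast

lemma qm_I:
  assumes "prob_space M" "L0_module M E add zero smul" "L0_seminorm M E add smul n"
  shows "qm M E add zero smul n"
  unfolding qm_def l0m_def qm_axioms_def l0m_axioms_def using assms by blast

lemma elt_I: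
  assumes P: "prob_space M" and m: "L0_module M S add zero smul"
    and F: "\<forall>p\<in>F. L0_seminorm M S add smul p" and Fne: "F \<noteq> {}"
  shows "elt M S add zero F"
proof -
  have L: "l0m M S add zero smul" unfolding l0m_def l0m_axioms_def using P m by blast
  show ?thesis
    unfolding elt_def elt_axioms_def
  proof (intro conjI allI impI)
    show "prob_space M" by (rule P)
    show "zero \<in> S" by (rule l0m.zero_in[OF L])
    show "F \<noteq> {}" by (rule Fne)
  next
    fix x y assume "x \<in> S" "y \<in> S"
    thus "add x y \<in> S" by (rule l0m.add_c[OF L])
  next
    fix x assume "x \<in> S"
    thus "add x zero = x" by (rule l0m.rid[OF L])
  next
    fix x y z assume "x \<in> S" "y \<in> S" "z \<in> S"
    thus "add (add x y) z = add x (add y z)" by (rule l0m.assoc[OF L])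
  next
    fix p z assume p: "p \<in> F" and z: "z \<in> S"
    show "p z \<in> borel_measurable M" by (rule semi_meas[OF bspec[OF F p] z])
  next
    fix p x y assume p: "p \<in> F" and x: "x \<in> S" and y: "y \<in> S"
    show "AE \<omega> in M. p (add x y) \<omega> \<le> p x \<omega> + p y \<omega>" by (rule semi_tri[OF bspec[OF F p] x y])
  next
    fix p assume p: "p \<in> F"
    show "AE \<omega> in M. p zero \<omega> = 0" by (rule qm.n_zero[OF qm_I[OF P m bspec[OF F p]]])
  qed
qed

definition ns :: "('e \<Rightarrow> 'w \<Rightarrow> real) set \<Rightarrow> 'e \<Rightarrow> 'w \<Rightarrow> real" where
  "ns Q x \<omega> = Max ((\<lambda>p. p x \<omega>) ` Q)"

lemma ns_semi:
  fixes smul :: "('w \<Rightarrow> 'k::{real_normed_field,banach}) \<Rightarrow> 'e \<Rightarrow> 'e"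
  assumes Q: "finite Q" "Q \<noteq> {}" and S: "\<forall>p\<in>Q. L0_seminorm M E add smul p"
  shows "L0_seminorm M E add smul (ns Q)"
  unfolding L0_seminorm_def
proof (intro conjI ballI)
  fix x assume x: "x \<in> E"
  show "ns Q x \<in> borel_measurable M"
    unfolding ns_def[abs_def] using Q S x by (intro borel_measurable_Max) (auto intro: semi_meas)
  have "AE \<omega> in M. \<forall>p\<in>Q. 0 \<le> p x \<omega>"
    using Q S x by (intro AE_finite_allI) (auto intro: semi_nonneg)
  thus "AE \<omega> in M. 0 \<le> ns Q x \<omega>"
  proof eventually_elim
    case (elim \<omega>)
    obtain p where p: "p \<in> Q" using Q by blast
    have "p x \<omega> \<le> ns Q x \<omega>" unfolding ns_def using Q p by (intro Max_ge) auto
    thus ?case using elim p by force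
  qed
next
  fix \<xi> :: "'w \<Rightarrow> 'k" and x assume xi: "\<xi> \<in> borel_measurable M" and x: "x \<in> E"
  have "AE \<omega> in M. \<forall>p\<in>Q. p (smul \<xi> x) \<omega> = norm (\<xi> \<omega>) * p x \<omega>"
    using Q S x xi by (intro AE_finite_allI) (auto intro: semi_hom)
  thus "AE \<omega> in M. ns Q (smul \<xi> x) \<omega> = norm (\<xi> \<omega>) * ns Q x \<omega>"
  proof eventually_elim
    case (elim \<omega>)
    have "(\<lambda>p. p (smul \<xi> x) \<omega>) ` Q = (\<lambda>t. norm (\<xi> \<omega>) * t) ` ((\<lambda>p. p x \<omega>) ` Q)"
      using elim by (auto simp: image_image intro!: image_cong)
    moreover have "mono (\<lambda>t. norm (\<xi> \<omega>) * t)" by (intro monoI mult_left_mono) auto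
    ultimately show ?case unfolding ns_def using Q by (simp add: mono_Max_commute)
  qed
next
  fix x y assume x: "x \<in> E" and y: "y \<in> E"
  have "AE \<omega> in M. \<forall>p\<in>Q. p (add x y) \<omega> \<le> p x \<omega> + p y \<omega>"
    using Q S x y by (intro AE_finite_allI) (auto intro: semi_tri)
  thus "AE \<omega> in M. ns Q (add x y) \<omega> \<le> ns Q x \<omega> + ns Q y \<omega>"
  proof eventually_elim
    case (elim \<omega>)
    have "\<forall>p\<in>Q. p (add x y) \<omega> \<le> ns Q x \<omega> + ns Q y \<omega>"
    proof
      fix p assume p: "p \<in> Q"
      have "p x \<omega> \<le> ns Q x \<omega>" "p y \<omega> \<le> ns Q y \<omega>" unfolding ns_def using Q p by (auto intro: Max_ge)
      thus "p (add x y) \<omega> \<le> ns Q x \<omega> + ns Q y \<omega>" using elim p by force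
    qed
    thus ?case unfolding ns_def using Q by simp
  qed
qed

context l0m
begin

lemma alg1: assumes x: "x \<in> E" and w: "w \<in> E" shows "add (add x w) (negm smul x) = w"
proof -
  have "add (add x w) (negm smul x) = add (add w x) (negm smul x)" using x w by (simp add: comm)
  also have "\<dots> = add w (add x (negm smul x))" using x w by (simp add: assoc neg_c)
  also have "\<dots> = w" using x w by (simp add: add_neg rid)
  finally show ?thesis .
qed

lemma alg2: assumes x: "x \<in> E" and y: "y \<in> E" shows "add x (add y (negm smul x)) = y"
proof -
  have "add x (add y (negm smul x)) = add (add x y) (negm smul x)" using x y by (simp add: assoc neg_c)
  also have "\<dots> = y" using alg1[OF x y] .
  finally show ?thesis .
qed

lemma alg3: assumes x: "x \<in> E" and y: "y \<in> E" and e: "add x (negm smul y) = zero" shows "x = y"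
proof -
  have "y = add zero y" using y by (simp add: lid)
  also have "\<dots> = add (add x (negm smul y)) y" using e by simp
  also have "\<dots> = add x (add (negm smul y) y)" using x y by (simp add: assoc neg_c)
  also have "add (negm smul y) y = zero" using y by (simp add: comm neg_c add_neg)
  also have "add x zero = x" using x by (simp add: rid)
  finally show ?thesis by simp
qed

end

lemma Max_ns: "{\<omega> \<in> space M. Max ((\<lambda>p. p z \<omega>) ` Q) < e} = {\<omega> \<in> space M. ns Q z \<omega> < e}"
  by (simp add: ns_def)

lemma ns_single: "ns {p} z \<omega> = p z \<omega>"
  by (simp add: ns_def)

theorem proposition5p1:
  fixes M :: "'w measure"
    and E :: "'e set" and add :: "'e \<Rightarrow> 'e \<Rightarrow> 'e" and zero :: 'e
    and smul :: "('w \<Rightarrow> 'k::{real_normed_field,banach}) \<Rightarrow> 'e \<Rightarrow> 'e"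
    and PP :: "('e \<Rightarrow> 'w \<Rightarrow> real) set"
  assumes "prob_space M"
    and "random_locally_convex_module M E add zero smul PP"
    and "PP \<noteq> {}"
  shows "\<exists>(QQ :: ('e \<Rightarrow> 'w \<Rightarrow> real) set set)
           (Eq :: ('e \<Rightarrow> 'w \<Rightarrow> real) set \<Rightarrow> 'e set set)
           (addq :: ('e \<Rightarrow> 'w \<Rightarrow> real) set \<Rightarrow> 'e set \<Rightarrow> 'e set \<Rightarrow> 'e set)
           (zeroq :: ('e \<Rightarrow> 'w \<Rightarrow> real) set \<Rightarrow> 'e set)
           (smulq :: ('e \<Rightarrow> 'w \<Rightarrow> real) set \<Rightarrow> ('w \<Rightarrow> 'k) \<Rightarrow> 'e set \<Rightarrow> 'e set)
           (nmq :: ('e \<Rightarrow> 'w \<Rightarrow> real) set \<Rightarrow> 'e set \<Rightarrow> 'w \<Rightarrow> real)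
           (h :: 'e \<Rightarrow> ('e \<Rightarrow> 'w \<Rightarrow> real) set \<Rightarrow> 'e set).
         (\<forall>q\<in>QQ. random_normed_module M (Eq q) (addq q) (zeroq q) (smulq q) (nmq q)) \<and>
         (\<forall>x\<in>E. h x \<in> (\<Pi>\<^sub>E q\<in>QQ. Eq q)) \<and>
         (\<forall>x\<in>E. \<forall>y\<in>E. h (add x y) = (\<lambda>q\<in>QQ. addq q (h x q) (h y q))) \<and>
         (\<forall>\<xi>\<in>borel_measurable M. \<forall>x\<in>E. h (smul \<xi> x) = (\<lambda>q\<in>QQ. smulq q \<xi> (h x q))) \<and>
         homeomorphic_map (eps_lambda_topology M E add PP)
           (subtopology
              (product_topology (\<lambda>q. eps_lambda_topology M (Eq q) (addq q) {nmq q}) QQ)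
              (h ` E))
           h"
proof -
  note rl = assms(2)[unfolded random_locally_convex_module_def]
  have m: "L0_module M E add zero smul" by (rule conjunct1[OF rl])
  have PPs: "\<forall>p\<in>PP. L0_seminorm M E add smul p" by (rule conjunct1[OF conjunct2[OF rl]])
  have sep: "\<forall>x\<in>E. (\<forall>p\<in>PP. AE \<omega> in M. p x \<omega> = 0) \<longrightarrow> x = zero" by (rule conjunct2[OF conjunct2[OF rl]])
  have L: "l0m M E add zero smul" unfolding l0m_def l0m_axioms_def using assms(1) m by blast
  interpret X: elt M E add zero PP by (rule elt_I[OF assms(1) m PPs assms(3)])
  define QQ where "QQ = {Q. finite Q \<and> Q \<noteq> {} \<and> Q \<subseteq> PP}"
  have semQ: "L0_seminorm M E add smul (ns Q)" if "Q \<in> QQ" for Q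
    using that PPs unfolding QQ_def by (intro ns_semi) auto
  have qmQ: "qm M E add zero smul (ns Q)" if "Q \<in> QQ" for Q
    by (rule qm_I[OF assms(1) m semQ[OF that]])
  define C :: "('e \<Rightarrow> 'w \<Rightarrow> real) set \<Rightarrow> 'e \<Rightarrow> 'e set" where "C Q = qcls M E add smul (ns Q)" for Q
  define Eq :: "('e \<Rightarrow> 'w \<Rightarrow> real) set \<Rightarrow> 'e set set" where "Eq Q = C Q ` E" for Q
  define addq :: "('e \<Rightarrow> 'w \<Rightarrow> real) set \<Rightarrow> 'e set \<Rightarrow> 'e set \<Rightarrow> 'e set" where "addq Q = qadd M E add smul (ns Q)" for Q
  define zeroq :: "('e \<Rightarrow> 'w \<Rightarrow> real) set \<Rightarrow> 'e set" where "zeroq Q = C Q zero" for Q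
  define smulq :: "('e \<Rightarrow> 'w \<Rightarrow> real) set \<Rightarrow> ('w \<Rightarrow> 'k) \<Rightarrow> 'e set \<Rightarrow> 'e set" where "smulq Q = qsmul M E add smul (ns Q)" for Q
  define nmq :: "('e \<Rightarrow> 'w \<Rightarrow> real) set \<Rightarrow> 'e set \<Rightarrow> 'w \<Rightarrow> real" where "nmq Q = qnm (ns Q)" for Q
  define h :: "'e \<Rightarrow> ('e \<Rightarrow> 'w \<Rightarrow> real) set \<Rightarrow> 'e set" where "h x = (\<lambda>Q\<in>QQ. C Q x)" for x
  define Y :: "('e \<Rightarrow> 'w \<Rightarrow> real) set \<Rightarrow> 'e set topology" where "Y Q = eps_lambda_topology M (Eq Q) (addq Q) {nmq Q}" for Q
  define X where "X = eps_lambda_topology M E add PP"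
  have addC: "addq Q (C Q x) (C Q y) = C Q (add x y)" if "Q \<in> QQ" "x \<in> E" "y \<in> E" for Q x y
    unfolding addq_def C_def using qm.qadd_cls[OF qmQ[OF that(1)] that(2,3)] .
  have smulC: "smulq Q \<xi> (C Q x) = C Q (smul \<xi> x)" if "Q \<in> QQ" "\<xi> \<in> borel_measurable M" "x \<in> E" for Q \<xi> x
    unfolding smulq_def C_def using qm.qsmul_cls[OF qmQ[OF that(1)] that(2,3)] .
  have measC: "measure M {\<omega> \<in> space M. nmq Q (C Q z) \<omega> < e} = measure M {\<omega> \<in> space M. ns Q z \<omega> < e}"
    if "Q \<in> QQ" "z \<in> E" for Q z e
    unfolding nmq_def C_def using qm.measure_qnm[OF qmQ[OF that(1)] that(2)] .
  have rnm: "random_normed_module M (Eq Q) (addq Q) (zeroq Q) (smulq Q) (nmq Q)" if "Q \<in> QQ" for Q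
    unfolding random_normed_module_def Eq_def addq_def zeroq_def smulq_def nmq_def C_def
    using qm.quot_module[OF qmQ[OF that]] qm.quot_norm[OF qmQ[OF that]] by blast
  have eltY: "elt M (Eq Q) (addq Q) (zeroq Q) {nmq Q}" if "Q \<in> QQ" for Q
  proof (rule elt_I[OF assms(1)])
    show "L0_module M (Eq Q) (addq Q) (zeroq Q) (smulq Q)"
      using rnm[OF that] unfolding random_normed_module_def by blast
    show "\<forall>p\<in>{nmq Q}. L0_seminorm M (Eq Q) (addq Q) (smulq Q) p"
      using rnm[OF that] unfolding random_normed_module_def L0_norm_def by blast
  qed simp
  have CE: "C Q x \<in> Eq Q" if "x \<in> E" for Q x using that unfolding Eq_def by blast
  have NB: "z \<in> eps_lambda_nbhd M E Q e l \<longleftrightarrow> C Q z \<in> eps_lambda_nbhd M (Eq Q) {nmq Q} e l"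
    if "Q \<in> QQ" "z \<in> E" for Q z e l
    unfolding eps_lambda_nbhd_def Max_ns ns_single using that CE[OF that(2)] measC[OF that] by simp
  have topX: "topspace X = E" unfolding X_def by (rule X.topspace_T)
  have topY: "topspace (Y Q) = Eq Q" if "Q \<in> QQ" for Q
    unfolding Y_def by (rule elt.topspace_T[OF eltY[OF that]])
  have QQD: "finite Q" "Q \<noteq> {}" "Q \<subseteq> PP" if "Q \<in> QQ" for Q using that unfolding QQ_def by auto
  have contC: "continuous_map X (Y Q) (C Q)" if Q: "Q \<in> QQ" for Q
  proof -
    interpret Yq: elt M "Eq Q" "addq Q" "zeroq Q" "{nmq Q}" by (rule eltY[OF Q])
    show ?thesis unfolding continuous_map_def
    proof (intro conjI allI impI)
      show "C Q \<in> topspace X \<rightarrow> topspace (Y Q)" using topX topY[OF Q] CE by auto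
    next
      fix U assume "openin (Y Q) U"
      hence gU: "Yq.good U" unfolding Y_def by (simp add: Yq.openin_T)
      have "X.good {x \<in> E. C Q x \<in> U}" unfolding X.good_def
      proof (intro conjI ballI)
        show "{x \<in> E. C Q x \<in> U} \<subseteq> E" by blast
      next
        fix x assume x: "x \<in> {x \<in> E. C Q x \<in> U}"
        have xE: "x \<in> E" and xU: "C Q x \<in> U" using x by auto
        obtain Q' e l where H: "finite Q'" "Q' \<noteq> {}" "Q' \<subseteq> {nmq Q}" "0 < e" "0 < l" "l < 1"
            "\<forall>c\<in>eps_lambda_nbhd M (Eq Q) Q' e l. addq Q (C Q x) c \<in> U"
          by (rule Yq.goodD[OF gU xU])
        have Q': "Q' = {nmq Q}" using H(2,3) by blast
        have A: "\<forall>z\<in>eps_lambda_nbhd M E Q e l. add x z \<in> {x \<in> E. C Q x \<in> U}"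
        proof
          fix z assume z: "z \<in> eps_lambda_nbhd M E Q e l"
          hence zE: "z \<in> E" by (simp add: eps_lambda_nbhd_def)
          have "C Q z \<in> eps_lambda_nbhd M (Eq Q) {nmq Q} e l" using NB[OF Q zE] z by simp
          hence "addq Q (C Q x) (C Q z) \<in> U" using H(7) Q' by simp
          hence "C Q (add x z) \<in> U" using addC[OF Q xE zE] by simp
          thus "add x z \<in> {x \<in> E. C Q x \<in> U}" using xE zE X.add_closed by simp
        qed
        show "\<exists>Q' eps lam. finite Q' \<and> Q' \<noteq> {} \<and> Q' \<subseteq> PP \<and> 0 < eps \<and> 0 < lam \<and> lam < 1 \<and>
          (\<forall>z\<in>eps_lambda_nbhd M E Q' eps lam. add x z \<in> {x \<in> E. C Q x \<in> U})"
          apply (rule exI[of _ Q], rule exI[of _ e], rule exI[of _ l])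
          using QQD[OF Q] H(4,5,6) A by simp
      qed
      moreover have "{x \<in> topspace X. C Q x \<in> U} = {x \<in> E. C Q x \<in> U}" using topX by simp
      ultimately show "openin X {x \<in> topspace X. C Q x \<in> U}" unfolding X_def by (simp add: X.openin_T)
    qed
  qed
  have hE: "h x \<in> (\<Pi>\<^sub>E Q\<in>QQ. Eq Q)" if "x \<in> E" for x
    unfolding h_def using CE[OF that] by (simp add: restrict_PiE_iff)
  have topP: "topspace (product_topology Y QQ) = (\<Pi>\<^sub>E Q\<in>QQ. Eq Q)"
    using topY by (simp cong: PiE_cong)
  have contH: "continuous_map X (product_topology Y QQ) h"
    unfolding continuous_map_componentwise
  proof (intro conjI ballI)
    show "h ` topspace X \<subseteq> extensional QQ" unfolding h_def by auto
  next
    fix Q assume Q: "Q \<in> QQ"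
    show "continuous_map X (Y Q) (\<lambda>x. h x Q)"
      by (rule continuous_map_eq[OF contC[OF Q]]) (simp add: h_def Q)
  qed
  have K: "\<exists>Q W. Q \<in> QQ \<and> openin (Y Q) W \<and> C Q x \<in> W \<and> (\<forall>y\<in>E. C Q y \<in> W \<longrightarrow> y \<in> U)"
    if U: "openin X U" and x: "x \<in> U" for U x
  proof -
    have gU: "X.good U" using U unfolding X_def by (simp add: X.openin_T)
    have xE: "x \<in> E" using gU x unfolding X.good_def by blast
    obtain Q e l where H: "finite Q" "Q \<noteq> {}" "Q \<subseteq> PP" "0 < e" "0 < l" "l < 1"
        "\<forall>z\<in>eps_lambda_nbhd M E Q e l. add x z \<in> U"
      by (rule X.goodD[OF gU x])
    have Q: "Q \<in> QQ" using H unfolding QQ_def by blast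
    interpret Yq: elt M "Eq Q" "addq Q" "zeroq Q" "{nmq Q}" by (rule eltY[OF Q])
    have "\<exists>W. Yq.good W \<and> C Q x \<in> W \<and> W \<subseteq> addq Q (C Q x) ` eps_lambda_nbhd M (Eq Q) {nmq Q} e l"
      by (rule Yq.interior_nb[OF CE[OF xE]]) (use H in auto)
    then obtain W where W: "Yq.good W" "C Q x \<in> W" "W \<subseteq> addq Q (C Q x) ` eps_lambda_nbhd M (Eq Q) {nmq Q} e l"
      by blast
    have oW: "openin (Y Q) W" unfolding Y_def using W(1) by (simp add: Yq.openin_T)
    have "\<forall>y\<in>E. C Q y \<in> W \<longrightarrow> y \<in> U"
    proof (intro ballI impI)
      fix y assume yE: "y \<in> E" and yW: "C Q y \<in> W"
      then obtain c where c: "c \<in> eps_lambda_nbhd M (Eq Q) {nmq Q} e l" "C Q y = addq Q (C Q x) c"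
        using W(3) by blast
      have "c \<in> Eq Q" using c(1) by (simp add: eps_lambda_nbhd_def)
      then obtain w where wE: "w \<in> E" and cw: "c = C Q w" unfolding Eq_def by blast
      have Cy: "C Q y = C Q (add x w)" using c(2) cw addC[OF Q xE wE] by simp
      define d where "d = add y (negm smul x)"
      have nxE: "negm smul x \<in> E" using l0m.neg_c[OF L xE] .
      have dE: "d \<in> E" unfolding d_def using X.add_closed[OF yE nxE] .
      have "C Q d = addq Q (C Q y) (C Q (negm smul x))" unfolding d_def using addC[OF Q yE nxE] by simp
      also have "\<dots> = addq Q (C Q (add x w)) (C Q (negm smul x))" using Cy by simp
      also have "\<dots> = C Q (add (add x w) (negm smul x))" using addC[OF Q X.add_closed[OF xE wE] nxE] .
      also have "add (add x w) (negm smul x) = w" using l0m.alg1[OF L xE wE] .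
      finally have Cd: "C Q d = c" using cw by simp
      have "d \<in> eps_lambda_nbhd M E Q e l" using NB[OF Q dE] Cd c(1) by simp
      hence "add x d \<in> U" using H(7) by blast
      moreover have "add x d = y" unfolding d_def using l0m.alg2[OF L xE yE] .
      ultimately show "y \<in> U" by simp
    qed
    thus ?thesis using Q oW W(2) by blast
  qed
  have openH: "open_map X (subtopology (product_topology Y QQ) (h ` E)) h"
    unfolding open_map_def
  proof (intro allI impI)
    fix U assume U: "openin X U"
    have UE: "U \<subseteq> E" using openin_subset[OF U] topX by simp
    define T where "T = \<Union>{{f \<in> topspace (product_topology Y QQ). f Q \<in> W} | Q W.
        Q \<in> QQ \<and> openin (Y Q) W \<and> (\<forall>y\<in>E. C Q y \<in> W \<longrightarrow> y \<in> U)}"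
    have oT: "openin (product_topology Y QQ) T" unfolding T_def
    proof (rule openin_Union)
      fix S assume "S \<in> {{f \<in> topspace (product_topology Y QQ). f Q \<in> W} | Q W.
        Q \<in> QQ \<and> openin (Y Q) W \<and> (\<forall>y\<in>E. C Q y \<in> W \<longrightarrow> y \<in> U)}"
      then obtain Q W where S: "S = {f \<in> topspace (product_topology Y QQ). f Q \<in> W}" "Q \<in> QQ" "openin (Y Q) W"
        by blast
      show "openin (product_topology Y QQ) S"
        unfolding S(1) by (rule openin_continuous_map_preimage[OF continuous_map_product_projection[of Q QQ Y, OF S(2)] S(3)])
    qed
    have "h ` U = T \<inter> h ` E"
    proof (intro set_eqI iffI)
      fix f assume "f \<in> h ` U"
      then obtain x where x: "x \<in> U" "f = h x" by blast
      obtain Q W where QW: "Q \<in> QQ" "openin (Y Q) W" "C Q x \<in> W" "\<forall>y\<in>E. C Q y \<in> W \<longrightarrow> y \<in> U"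
        using K[OF U x(1)] by blast
      have "h x \<in> topspace (product_topology Y QQ)" using hE UE x(1) topP by auto
      moreover have "h x Q = C Q x" unfolding h_def using QW(1) by simp
      ultimately have hx: "h x \<in> {f \<in> topspace (product_topology Y QQ). f Q \<in> W}" using QW by simp
      have mem: "{f \<in> topspace (product_topology Y QQ). f Q \<in> W} \<in> {{f \<in> topspace (product_topology Y QQ). f Q \<in> W} | Q W.
        Q \<in> QQ \<and> openin (Y Q) W \<and> (\<forall>y\<in>E. C Q y \<in> W \<longrightarrow> y \<in> U)}" using QW by blast
      have "h x \<in> T" unfolding T_def by (rule UnionI[OF mem hx])
      thus "f \<in> T \<inter> h ` E" using x UE by blast
    next
      fix f assume f: "f \<in> T \<inter> h ` E"
      then obtain y where y: "y \<in> E" "f = h y" by blast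
      from f obtain S where S: "S \<in> {{f \<in> topspace (product_topology Y QQ). f Q \<in> W} | Q W.
        Q \<in> QQ \<and> openin (Y Q) W \<and> (\<forall>y\<in>E. C Q y \<in> W \<longrightarrow> y \<in> U)}" "f \<in> S"
        unfolding T_def by blast
      from S(1) obtain Q W where SQ: "S = {f \<in> topspace (product_topology Y QQ). f Q \<in> W}" "Q \<in> QQ"
        "\<forall>y\<in>E. C Q y \<in> W \<longrightarrow> y \<in> U" by blast
      have QW: "Q \<in> QQ" "f Q \<in> W" "\<forall>y\<in>E. C Q y \<in> W \<longrightarrow> y \<in> U" using SQ S(2) by auto
      have "C Q y \<in> W" using QW y unfolding h_def by simp
      hence "y \<in> U" using QW(3) y(1) by blast
      thus "f \<in> h ` U" using y by blast
    qed
    thus "openin (subtopology (product_topology Y QQ) (h ` E)) (h ` U)"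
      unfolding openin_subtopology using oT by blast
  qed
  have surjH: "h ` topspace X = topspace (subtopology (product_topology Y QQ) (h ` E))"
    using topX topP hE by auto
  have injH: "inj_on h (topspace X)" unfolding topX
  proof (rule inj_onI)
    fix x y assume xE: "x \<in> E" and yE: "y \<in> E" and hxy: "h x = h y"
    have "\<forall>p\<in>PP. AE \<omega> in M. p (add x (negm smul y)) \<omega> = 0"
    proof
      fix p assume p: "p \<in> PP"
      have Q: "{p} \<in> QQ" using p unfolding QQ_def by auto
      have "C {p} x = C {p} y" using fun_cong[OF hxy, of "{p}"] Q unfolding h_def by simp
      hence "AE \<omega> in M. ns {p} (add x (negm smul y)) \<omega> = 0"
        using qm.cls_eq[OF qmQ[OF Q] xE yE] qm.rel_def[OF qmQ[OF Q]] unfolding C_def by simp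
      thus "AE \<omega> in M. p (add x (negm smul y)) \<omega> = 0" by (simp add: ns_single)
    qed
    hence "add x (negm smul y) = zero" using sep X.add_closed[OF xE l0m.neg_c[OF L yE]] by blast
    thus "x = y" using l0m.alg3[OF L xE yE] by blast
  qed
  have homeo: "homeomorphic_map X (subtopology (product_topology Y QQ) (h ` E)) h"
    by (rule bijective_open_imp_homeomorphic_map[OF _ openH surjH injH])
       (rule continuous_map_into_subtopology[OF contH], use topX in auto)
  have hadd: "\<forall>x\<in>E. \<forall>y\<in>E. h (add x y) = (\<lambda>q\<in>QQ. addq q (h x q) (h y q))"
    unfolding h_def using addC by (auto intro!: restrict_ext)
  have hsmul: "\<forall>\<xi>\<in>borel_measurable M. \<forall>x\<in>E. h (smul \<xi> x) = (\<lambda>q\<in>QQ. smulq q \<xi> (h x q))"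
    unfolding h_def using smulC by (auto intro!: restrict_ext)
  have Yeq: "(\<lambda>q. eps_lambda_topology M (Eq q) (addq q) {nmq q}) = Y" by (simp add: Y_def fun_eq_iff)
  show ?thesis
    apply (rule exI[of _ QQ], rule exI[of _ Eq], rule exI[of _ addq], rule exI[of _ zeroq],
        rule exI[of _ smulq], rule exI[of _ nmq], rule exI[of _ h])
    apply (intro conjI)
    using rnm apply blast
    using hE apply blast
    using hadd apply blast
    using hsmul apply blast
    using homeo unfolding Yeq X_def .
qed

end
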